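(* Under the hypotheses of the following setting, let $a>0$ be such that for every $\mathfrak{z}\in\mathbb{C}\setminus[a,\infty)$ and every $\epsilon\in I$ the function $h^\epsilon-\mathfrak{z}1$ has a $\sharp^{B^\epsilon}$-inverse $r^\epsilon_{\mathfrak z}\in\mathfrak{F}[\mathfrak{L}]$ and $(\epsilon,X)\mapsto r^\epsilon_{\mathfrak z}(X)$ belongs to $\mathfrak{F}[\widetilde{\mathfrak{L}}]$ (such $a$ exists). Setting: $I$ compact interval, $m>0$, $\{h^\epsilon\}$ real-valued with $h^\epsilon\in S^m_{1,\mathsf{ell}}(\Xi)$, $\epsilon\mapsto h^\epsilon\in S^m_1(\Xi)$ Fréchet-continuous, $h^\epsilon\ge -C$ uniformly; $\{B^\epsilon\}$ magnetic fields with components in $BC^\infty(\mathcal{X})$ depending continuously on $\epsilon$ in the Fréchet topology. Then for each such $\mathfrak{z}$ the map $I\ni\epsilon\mapsto r^\epsilon_{\mathfrak z}\in\mathfrak{F}[\mathfrak{L}]$ is continuous for the norm $\|G\|_{\mathfrak{F}(\mathfrak{L})}:=\int_{\mathcal X}dy\,\sup_{x\in\mathcal{X}}|(\mathfrak{F}^-G)(x,y)|$.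
   Context: Notation: $\mathcal{X}=\mathbb{R}^n$, $\Xi=\mathcal{X}\times\mathcal{X}^*$, points $X=(x,\xi)$; $\sigma(Y,Z)=z\cdot\eta-y\cdot\zeta$. $S^m_1(\Xi)$: smooth $f$ with $|\partial_x^a\partial_\xi^\alpha f|\le C_{a\alpha}\langle\xi\rangle^{m-|\alpha|}$, with the associated Fréchet seminorms; elliptic: $|f|\ge C\langle\xi\rangle^m$ for $|\xi|$ large. Magnetic Moyal product: with $\Gamma^B(x,y,z):=4\sum_{j,k}y_jz_k\int_0^1ds\int_0^{1-s}dt\,B_{jk}(x-y-z+2sy+2tz)$, $(f\sharp^Bg)(X)=\pi^{-2n}\int\int dYdZ\,e^{-2i\sigma(Y,Z)}e^{-i\Gamma^B(x,y,z)}f(X-Y)g(X-Z)$, extended by duality to the magnetic Moyal algebra $\mathfrak{M}^B(\Xi)\supset S^m_1(\Xi)$ with unit $1$. $[\mathfrak{F}^-f](x,y)=\int d\xi\,e^{i\xi\cdot y}f(x,\xi)$, $\mathfrak{F}$ its inverse. $\mathfrak{L}=L^1(\mathcal{X};BC_u(\mathcal{X}))$: functions $\phi(x,y)$ with norm $\int dy\sup_x|\phi(x,y)|$ ($BC_u$: bounded uniformly continuous), $\mathfrak F[\mathfrak L]=\{f:\mathfrak F^-f\in\mathfrak L\}$. $\widetilde{\mathfrak{L}}$: completion of $C_c(\mathcal{X};C(I;BC_u(\mathcal{X})))$ in the norm $\int dy\sup_\epsilon\sup_x|\tilde\phi(\epsilon,x,y)|$; $\mathfrak F[\widetilde{\mathfrak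 L}]$: functions on $I\times\Xi$ whose partial Fourier transform in $\xi$ lies in $\widetilde{\mathfrak L}$. *)

theory Defs
  imports "HOL-Analysis.Analysis"
begin

definition dpart :: "'a::real_normed_vector \<Rightarrow> ('a \<Rightarrow> 'b::real_normed_vector) \<Rightarrow> 'a \<Rightarrow> 'b" where
  "dpart v f X = vector_derivative (\<lambda>t. f (X + t *\<^sub>R v)) (at 0)"

fun iter_d :: "'a::real_normed_vector list \<Rightarrow> ('a \<Rightarrow> 'b::real_normed_vector) \<Rightarrow> 'a \<Rightarrow> 'b" where
  "iter_d [] f = f"
| "iter_d (v # vs) f = dpart v (iter_d vs f)"

definition smooth :: "('a::euclidean_space \<Rightarrow> 'b::real_normed_vector) \<Rightarrow> bool" where
  "smooth f \<longleftrightarrow> (\<forall>vs. set vs \<subseteq> Basis \<longrightarrow> (\<forall>X. iter_d vs f differentiable at X))"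

type_synonym ('n) phase = "(real^'n) \<times> (real^'n)"

definition jbr :: "real^'n::finite \<Rightarrow> real" where
  "jbr \<xi> = sqrt (1 + (norm \<xi>)\<^sup>2)"

text \<open>number of derivatives in the momentum (xi) variables\<close>
definition xi_count :: "'n::finite phase list \<Rightarrow> nat" where
  "xi_count vs = length (filter (\<lambda>v. fst v = 0) vs)"

definition S1 :: "real \<Rightarrow> ('n::finite phase \<Rightarrow> complex) \<Rightarrow> bool" where
  "S1 m f \<longleftrightarrow> smooth f \<and>
     (\<forall>vs. set vs \<subseteq> Basis \<longrightarrow>
        (\<exists>C. \<forall>X. cmod (iter_d vs f X) \<le> C * jbr (snd X) powr (m - real (xi_count vs))))"

definition elliptic :: "real \<Rightarrow> ('n::finite phase \<Rightarrow> complex) \<Rightarrow> bool" where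
  "elliptic m f \<longleftrightarrow> (\<exists>C>0. \<exists>R. \<forall>X. norm (snd X) \<ge> R \<longrightarrow> cmod (f X) \<ge> C * jbr (snd X) powr m)"

definition S1_seminorm :: "real \<Rightarrow> 'n::finite phase list \<Rightarrow> ('n phase \<Rightarrow> complex) \<Rightarrow> real" where
  "S1_seminorm m vs f = (SUP X. cmod (iter_d vs f X) / jbr (snd X) powr (m - real (xi_count vs)))"

definition S1_cont :: "real \<Rightarrow> real set \<Rightarrow> (real \<Rightarrow> 'n::finite phase \<Rightarrow> complex) \<Rightarrow> bool" where
  "S1_cont m I h \<longleftrightarrow> (\<forall>vs. set vs \<subseteq> Basis \<longrightarrow> (\<forall>\<epsilon>0\<in>I.
      ((\<lambda>\<epsilon>. S1_seminorm m vs (\<lambda>X. h \<epsilon> X - h \<epsilon>0 X)) \<longlongrightarrow> 0) (at \<epsilon>0 within I)))"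

definition BCinf :: "('a::euclidean_space \<Rightarrow> real) \<Rightarrow> bool" where
  "BCinf f \<longleftrightarrow> smooth f \<and> (\<forall>vs. set vs \<subseteq> Basis \<longrightarrow> bounded (range (iter_d vs f)))"

definition BC_seminorm :: "'a::euclidean_space list \<Rightarrow> ('a \<Rightarrow> real) \<Rightarrow> real" where
  "BC_seminorm vs f = (SUP x. \<bar>iter_d vs f x\<bar>)"

text \<open>A magnetic field: a closed 2-form with components in BC-infinity.\<close>
definition magnetic_field :: "('n::finite \<Rightarrow> 'n \<Rightarrow> real^'n \<Rightarrow> real) \<Rightarrow> bool" where
  "magnetic_field B \<longleftrightarrow> (\<forall>j k. BCinf (B j k)) \<and> (\<forall>j k x. B j k x = - B k j x) \<and>
     (\<forall>j k l x. dpart (axis j 1) (B k l) x + dpart (axis k 1) (B l j) x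
                + dpart (axis l 1) (B j k) x = 0)"

definition BC_cont :: "real set \<Rightarrow> (real \<Rightarrow> 'n::finite \<Rightarrow> 'n \<Rightarrow> real^'n \<Rightarrow> real) \<Rightarrow> bool" where
  "BC_cont I B \<longleftrightarrow> (\<forall>j k vs. set vs \<subseteq> Basis \<longrightarrow> (\<forall>\<epsilon>0\<in>I.
      ((\<lambda>\<epsilon>. BC_seminorm vs (\<lambda>x. B \<epsilon> j k x - B \<epsilon>0 j k x)) \<longlongrightarrow> 0) (at \<epsilon>0 within I)))"

definition sigma :: "'n::finite phase \<Rightarrow> 'n phase \<Rightarrow> real" where
  "sigma Y Z = fst Z \<bullet> snd Y - fst Y \<bullet> snd Z"

definition Gamma :: "('n::finite \<Rightarrow> 'n \<Rightarrow> real^'n \<Rightarrow> real) \<Rightarrow> real^'n \<Rightarrow> real^'n \<Rightarrow> real^'n \<Rightarrow> real" where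
  "Gamma B x y z = 4 * (\<Sum>j\<in>UNIV. \<Sum>k\<in>UNIV. y $ j * z $ k *
      set_lebesgue_integral lborel {0..1} (\<lambda>s. set_lebesgue_integral lborel {0..1-s}
          (\<lambda>t. B j k (x - y - z + (2 * s) *\<^sub>R y + (2 * t) *\<^sub>R z))))"

text \<open>Magnetic Moyal product of two Schwartz functions (absolutely convergent integral).\<close>
definition moyal :: "('n::finite \<Rightarrow> 'n \<Rightarrow> real^'n \<Rightarrow> real) \<Rightarrow> ('n phase \<Rightarrow> complex) \<Rightarrow> ('n phase \<Rightarrow> complex)
     \<Rightarrow> 'n phase \<Rightarrow> complex" where
  "moyal B f g X = complex_of_real (1 / pi ^ (2 * CARD('n))) *
     (\<integral>Y. (\<integral>Z. exp (- (2 * \<i>) * complex_of_real (sigma Y Z))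
                 * exp (- \<i> * complex_of_real (Gamma B (fst X) (fst Y) (fst Z)))
                 * f (X - Y) * g (X - Z) \<partial>lborel) \<partial>lborel)"

definition schwartz :: "('a::euclidean_space \<Rightarrow> complex) \<Rightarrow> bool" where
  "schwartz f \<longleftrightarrow> smooth f \<and> (\<forall>vs. set vs \<subseteq> Basis \<longrightarrow>
      (\<forall>k::nat. \<exists>C. \<forall>X. (1 + norm X) ^ k * cmod (iter_d vs f X) \<le> C))"

text \<open>Functions defining tempered distributions by integration.\<close>
definition temp_fun :: "('n::finite phase \<Rightarrow> complex) \<Rightarrow> bool" where
  "temp_fun F \<longleftrightarrow> F \<in> borel_measurable lborel \<and>
     (\<forall>\<theta>. schwartz \<theta> \<longrightarrow> integrable lborel (\<lambda>X. F X * \<theta> X))"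

text \<open>psi = G #B phi (distribution G, Schwartz phi), defined by duality:
  <G # phi, chi> = <G, phi # chi>.\<close>
definition is_right_prod :: "('n::finite \<Rightarrow> 'n \<Rightarrow> real^'n \<Rightarrow> real) \<Rightarrow> ('n phase \<Rightarrow> complex)
     \<Rightarrow> ('n phase \<Rightarrow> complex) \<Rightarrow> ('n phase \<Rightarrow> complex) \<Rightarrow> bool" where
  "is_right_prod B G \<phi> \<psi> \<longleftrightarrow> schwartz \<psi> \<and> (\<forall>\<theta>. schwartz \<theta> \<longrightarrow>
     (\<integral>X. \<psi> X * \<theta> X \<partial>lborel) = (\<integral>X. G X * moyal B \<phi> \<theta> X \<partial>lborel))"

text \<open>psi = phi #B G, defined by duality: <phi # G, chi> = <G, chi # phi>.\<close>
definition is_left_prod :: "('n::finite \<Rightarrow> 'n \<Rightarrow> real^'n \<Rightarrow> real) \<Rightarrow> ('n phase \<Rightarrow> complex)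
     \<Rightarrow> ('n phase \<Rightarrow> complex) \<Rightarrow> ('n phase \<Rightarrow> complex) \<Rightarrow> bool" where
  "is_left_prod B G \<phi> \<psi> \<longleftrightarrow> schwartz \<psi> \<and> (\<forall>\<theta>. schwartz \<theta> \<longrightarrow>
     (\<integral>X. \<psi> X * \<theta> X \<partial>lborel) = (\<integral>X. G X * moyal B \<theta> \<phi> X \<partial>lborel))"

definition moyal_alg :: "('n::finite \<Rightarrow> 'n \<Rightarrow> real^'n \<Rightarrow> real) \<Rightarrow> ('n phase \<Rightarrow> complex) \<Rightarrow> bool" where
  "moyal_alg B F \<longleftrightarrow> temp_fun F \<and> (\<forall>\<phi>. schwartz \<phi> \<longrightarrow>
     (\<exists>\<psi>. is_right_prod B F \<phi> \<psi>) \<and> (\<exists>\<psi>. is_left_prod B F \<phi> \<psi>))"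

text \<open>G is the #B-inverse of F in M^B: F # G = 1 = G # F, where for F, G in M^B
  the product is defined by duality, <F # G, phi> = <F, G # phi>, and <1, phi> = int phi.\<close>
definition sharp_inverse :: "('n::finite \<Rightarrow> 'n \<Rightarrow> real^'n \<Rightarrow> real) \<Rightarrow> ('n phase \<Rightarrow> complex)
     \<Rightarrow> ('n phase \<Rightarrow> complex) \<Rightarrow> bool" where
  "sharp_inverse B F G \<longleftrightarrow> moyal_alg B F \<and> moyal_alg B G \<and>
     (\<forall>\<phi> \<psi>. schwartz \<phi> \<and> is_right_prod B G \<phi> \<psi> \<longrightarrow>
        (\<integral>X. F X * \<psi> X \<partial>lborel) = (\<integral>X. \<phi> X \<partial>lborel)) \<and>
     (\<forall>\<phi> \<psi>. schwartz \<phi> \<and> is_right_prod B F \<phi> \<psi> \<longrightarrow>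
        (\<integral>X. G X * \<psi> X \<partial>lborel) = (\<integral>X. \<phi> X \<partial>lborel))"

definition BCu :: "('a::metric_space \<Rightarrow> complex) \<Rightarrow> bool" where
  "BCu f \<longleftrightarrow> bounded (range f) \<and> uniformly_continuous_on UNIV f"

text \<open>C_c(X; BC_u(X)), functions phi x y (x in BC_u, continuous compactly supported in y)\<close>
definition Cc_L :: "(real^'n::finite \<Rightarrow> real^'n \<Rightarrow> complex) set" where
  "Cc_L = {\<phi>. (\<forall>y. BCu (\<lambda>x. \<phi> x y)) \<and>
      (\<forall>y0. \<forall>e>0. \<exists>d>0. \<forall>y. dist y y0 < d \<longrightarrow> (\<forall>x. cmod (\<phi> x y - \<phi> x y0) \<le> e)) \<and>
      (\<exists>R. \<forall>x y. norm y > R \<longrightarrow> \<phi> x y = 0)}"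

definition L_enorm :: "(real^'n::finite \<Rightarrow> real^'n \<Rightarrow> complex) \<Rightarrow> ennreal" where
  "L_enorm \<phi> = (\<integral>\<^sup>+ y. (SUP x. ennreal (cmod (\<phi> x y))) \<partial>lborel)"

text \<open>L = L^1(X; BC_u(X)), the completion of C_c(X; BC_u(X)) in the norm int dy sup_x |phi|,
  realised by (good) representatives.\<close>
definition Lset :: "(real^'n::finite \<Rightarrow> real^'n \<Rightarrow> complex) set" where
  "Lset = {\<phi>. (\<forall>y. BCu (\<lambda>x. \<phi> x y)) \<and> (\<forall>x. (\<lambda>y. \<phi> x y) \<in> borel_measurable lborel) \<and>
      (\<exists>s. (\<forall>k. s k \<in> Cc_L) \<and> ((\<lambda>k. L_enorm (\<lambda>x y. s k x y - \<phi> x y)) \<longlonglongrightarrow> 0))}"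

definition L_norm :: "(real^'n::finite \<Rightarrow> real^'n \<Rightarrow> complex) \<Rightarrow> real" where
  "L_norm \<phi> = enn2real (L_enorm \<phi>)"

text \<open>C_c(X; C(I; BC_u(X))), functions phi eps x y\<close>
definition Cc_Lt :: "real set \<Rightarrow> (real \<Rightarrow> real^'n::finite \<Rightarrow> real^'n \<Rightarrow> complex) set" where
  "Cc_Lt I = {\<phi>. (\<forall>\<epsilon>\<in>I. \<forall>y. BCu (\<lambda>x. \<phi> \<epsilon> x y)) \<and>
      (\<forall>y. \<forall>\<epsilon>0\<in>I. \<forall>e>0. \<exists>d>0. \<forall>\<epsilon>\<in>I. \<bar>\<epsilon> - \<epsilon>0\<bar> < d \<longrightarrow> (\<forall>x. cmod (\<phi> \<epsilon> x y - \<phi> \<epsilon>0 x y) \<le> e)) \<and>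
      (\<forall>y0. \<forall>e>0. \<exists>d>0. \<forall>y. dist y y0 < d \<longrightarrow> (\<forall>\<epsilon>\<in>I. \<forall>x. cmod (\<phi> \<epsilon> x y - \<phi> \<epsilon> x y0) \<le> e)) \<and>
      (\<exists>R. \<forall>\<epsilon> x y. norm y > R \<longrightarrow> \<phi> \<epsilon> x y = 0)}"

definition Lt_enorm :: "real set \<Rightarrow> (real \<Rightarrow> real^'n::finite \<Rightarrow> real^'n \<Rightarrow> complex) \<Rightarrow> ennreal" where
  "Lt_enorm I \<phi> = (\<integral>\<^sup>+ y. (SUP \<epsilon>\<in>I. SUP x. ennreal (cmod (\<phi> \<epsilon> x y))) \<partial>lborel)"

text \<open>L-tilde: completion of C_c(X; C(I; BC_u(X))) in the norm int dy sup_eps sup_x |phi|,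
  realised by (good) representatives.\<close>
definition Ltset :: "real set \<Rightarrow> (real \<Rightarrow> real^'n::finite \<Rightarrow> real^'n \<Rightarrow> complex) set" where
  "Ltset I = {\<phi>. (\<forall>\<epsilon>\<in>I. \<forall>y. BCu (\<lambda>x. \<phi> \<epsilon> x y)) \<and>
      (\<forall>y. \<forall>\<epsilon>0\<in>I. \<forall>e>0. \<exists>d>0. \<forall>\<epsilon>\<in>I. \<bar>\<epsilon> - \<epsilon>0\<bar> < d \<longrightarrow> (\<forall>x. cmod (\<phi> \<epsilon> x y - \<phi> \<epsilon>0 x y) \<le> e)) \<and>
      (\<forall>\<epsilon>\<in>I. \<forall>x. (\<lambda>y. \<phi> \<epsilon> x y) \<in> borel_measurable lborel) \<and>
      (\<exists>s. (\<forall>k. s k \<in> Cc_Lt I) \<and> ((\<lambda>k. Lt_enorm I (\<lambda>\<epsilon> x y. s k \<epsilon> x y - \<phi> \<epsilon> x y)) \<longlonglongrightarrow> 0))}"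

text \<open>Partial Fourier transform F (inverse of F^-, where
  (F^- f)(x,y) = int d xi e^{i xi.y} f(x,xi)).\<close>
definition Fou :: "(real^'n::finite \<Rightarrow> real^'n \<Rightarrow> complex) \<Rightarrow> 'n phase \<Rightarrow> complex" where
  "Fou \<phi> X = complex_of_real ((2 * pi) powr (- real CARD('n))) *
     (\<integral>y. exp (- \<i> * complex_of_real (snd X \<bullet> y)) * \<phi> (fst X) y \<partial>lborel)"

definition FLset :: "('n::finite phase \<Rightarrow> complex) set" where
  "FLset = {f. \<exists>\<phi>\<in>Lset. f = Fou \<phi>}"

definition FLt :: "real set \<Rightarrow> (real \<Rightarrow> 'n::finite phase \<Rightarrow> complex) \<Rightarrow> bool" where
  "FLt I g \<longleftrightarrow> (\<exists>\<phi>\<in>Ltset I. \<forall>\<epsilon>\<in>I. g \<epsilon> = Fou (\<phi> \<epsilon>))"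

text \<open>||G||_{F(L)} = int dy sup_x |(F^- G)(x,y)|; F^- G is the (essentially unique)
  element of L with F(F^- G) = G, so we take the value over the representatives.\<close>
definition FL_norm :: "('n::finite phase \<Rightarrow> complex) \<Rightarrow> real" where
  "FL_norm f = Inf {L_norm \<phi> | \<phi>. \<phi> \<in> Lset \<and> f = Fou \<phi>}"

end

theory Submission
  imports Defs
begin


lemma sup_meas:
  fixes g :: "real^'n::finite \<Rightarrow> real^'n \<Rightarrow> complex"
  assumes c: "\<And>y. continuous_on UNIV (\<lambda>x. g x y)"
    and m: "\<And>x. (\<lambda>y. g x y) \<in> borel_measurable lborel"
  shows "(\<lambda>y. SUP x. ennreal (cmod (g x y))) \<in> borel_measurable lborel"
proof -
  obtain D :: "(real^'n) set" where D0: "countable D \<and> (\<forall>X. open X \<longrightarrow> X \<noteq> {} \<longrightarrow> (\<exists>d \<in> D. d \<in> X))"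
    using countable_dense_exists by blast
  then have D: "countable D" "\<And>X. open X \<Longrightarrow> X \<noteq> {} \<Longrightarrow> \<exists>d \<in> D. d \<in> X" by auto
  have eq: "(SUP x. ennreal (cmod (g x y))) = (SUP x\<in>D. ennreal (cmod (g x y)))" for y
  proof (rule antisym)
    let ?S = "SUP x\<in>D. ennreal (cmod (g x y))"
    have cl: "closed {x. ennreal (cmod (g x y)) \<le> ?S}"
      apply (rule closed_Collect_le)
      apply (rule continuous_on_ennreal)
      apply (rule continuous_on_norm[OF c]) apply auto done
    have "x \<in> {x. ennreal (cmod (g x y)) \<le> ?S}" for x
    proof (rule ccontr)
      assume "x \<notin> {x. ennreal (cmod (g x y)) \<le> ?S}"
      then have "x \<in> - {x. ennreal (cmod (g x y)) \<le> ?S}" by simp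
      moreover have "open (- {x. ennreal (cmod (g x y)) \<le> ?S})" using cl by auto
      ultimately obtain d where "d \<in> D" "d \<in> - {x. ennreal (cmod (g x y)) \<le> ?S}"
        using D(2) by blast
      then show False by (auto intro: SUP_upper)
    qed
    then show "(SUP x. ennreal (cmod (g x y))) \<le> ?S" by (auto intro!: SUP_least)
    show "?S \<le> (SUP x. ennreal (cmod (g x y)))" by (rule SUP_subset_mono) auto
  qed
  have m2: "\<And>x. (\<lambda>y. g x y) \<in> borel_measurable borel" using m by simp
  note m2[measurable]
  have m3: "\<And>x. (\<lambda>y. ennreal (cmod (g x y))) \<in> borel_measurable borel" by measurable
  show ?thesis unfolding eq by (rule borel_measurable_SUP) (auto intro!: D m3)
qed


lemma tri:
  fixes f g h :: "real^'n::finite \<Rightarrow> real^'n \<Rightarrow> complex"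
  assumes "(\<lambda>y. SUP x. ennreal (cmod (f x y - g x y))) \<in> borel_measurable lborel"
    "(\<lambda>y. SUP x. ennreal (cmod (g x y - h x y))) \<in> borel_measurable lborel"
  shows "L_enorm (\<lambda>x y. f x y - h x y) \<le> L_enorm (\<lambda>x y. f x y - g x y) + L_enorm (\<lambda>x y. g x y - h x y)"
proof -
  have "(SUP x. ennreal (cmod (f x y - h x y))) \<le> (SUP x. ennreal (cmod (f x y - g x y))) + (SUP x. ennreal (cmod (g x y - h x y)))" for y
  proof (rule SUP_least)
    fix x
    have "ennreal (cmod (f x y - h x y)) \<le> ennreal (cmod (f x y - g x y)) + ennreal (cmod (g x y - h x y))"
      using norm_triangle_ineq[of "f x y - g x y" "g x y - h x y"]
      by (simp add: ennreal_plus[symmetric] del: ennreal_plus)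
    also have "\<dots> \<le> (SUP x. ennreal (cmod (f x y - g x y))) + (SUP x. ennreal (cmod (g x y - h x y)))"
      by (intro add_mono SUP_upper) auto
    finally show "ennreal (cmod (f x y - h x y)) \<le> \<dots>" .
  qed
  then have "L_enorm (\<lambda>x y. f x y - h x y) \<le> (\<integral>\<^sup>+ y. (SUP x. ennreal (cmod (f x y - g x y))) + (SUP x. ennreal (cmod (g x y - h x y))) \<partial>lborel)"
    unfolding L_enorm_def by (intro nn_integral_mono) auto
  also have "\<dots> = L_enorm (\<lambda>x y. f x y - g x y) + L_enorm (\<lambda>x y. g x y - h x y)"
    unfolding L_enorm_def by (rule nn_integral_add[OF assms])
  finally show ?thesis .
qed


lemma cover:
  fixes P :: "real^'n::finite \<Rightarrow> real^'n \<Rightarrow> bool"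
  assumes "\<And>y0. \<exists>d>0. \<forall>y. dist y y0 < d \<longrightarrow> P y0 y"
  shows "\<exists>T. finite T \<and> (\<forall>y\<in>cball 0 R. \<exists>t\<in>T. P t y)"
proof -
  obtain d where d: "\<And>y0. d y0 > 0" "\<And>y0 y. dist y y0 < d y0 \<Longrightarrow> P y0 y"
    using assms by metis
  have "cball 0 R \<subseteq> (\<Union>c\<in>cball 0 R. ball c (d c))" using d(1) by auto
  then obtain T where "T \<subseteq> cball 0 R" "finite T" "cball 0 R \<subseteq> (\<Union>c\<in>T. ball c (d c))"
    using compactE_image[of "cball 0 R" "cball 0 R" "\<lambda>c. ball c (d c)"] by auto
  moreover have "\<exists>t\<in>T. P t y" if "y \<in> cball 0 R" "cball 0 R \<subseteq> (\<Union>c\<in>T. ball c (d c))" for y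
  proof -
    from that obtain t where "t \<in> T" "y \<in> ball t (d t)" by blast
    then have "dist y t < d t" by (simp add: dist_commute)
    then show ?thesis using d(2) \<open>t \<in> T\<close> by blast
  qed
  ultimately show ?thesis by blast
qed




lemma bound_L:
  fixes g :: "real^'n::finite \<Rightarrow> real^'n \<Rightarrow> complex"
  assumes "\<And>x y. cmod (g x y) \<le> M" "\<And>x y. norm y > R \<Longrightarrow> g x y = 0"
  shows "L_enorm g \<le> ennreal M * emeasure lborel (cball (0::real^'n) R)"
proof -
  have pw: "(SUP x. ennreal (cmod (g x y))) \<le> ennreal M * indicator (cball 0 R) y" for y
  proof (cases "y \<in> cball 0 R")
    case True
    then show ?thesis using assms(1) by (auto intro!: SUP_least ennreal_leI)
  next
    case False
    then show ?thesis using assms(2) by auto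
  qed
  have "L_enorm g \<le> (\<integral>\<^sup>+ y. ennreal M * indicator (cball (0::real^'n) R) y \<partial>lborel)"
    unfolding L_enorm_def by (rule nn_integral_mono) (rule pw)
  also have "\<dots> = ennreal M * emeasure lborel (cball (0::real^'n) R)"
    by (rule nn_integral_cmult_indicator[where M=lborel and c="ennreal M"]) simp
  finally show ?thesis .
qed

lemma bound_L_fin:
  fixes g :: "real^'n::finite \<Rightarrow> real^'n \<Rightarrow> complex"
  assumes "\<And>x y. cmod (g x y) \<le> M" "\<And>x y. norm y > R \<Longrightarrow> g x y = 0"
  shows "L_enorm g < \<infinity>"
proof -
  have "ennreal M * emeasure lborel (cball (0::real^'n) R) < \<infinity>"
    using emeasure_lborel_cball_finite[of "0::real^'n" R] by (auto simp: ennreal_mult_less_top)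
  then show ?thesis using bound_L[OF assms] by (rule le_less_trans[rotated])
qed

lemma int_L:
  fixes \<psi> :: "real^'n::finite \<Rightarrow> real^'n \<Rightarrow> complex"
  assumes m: "(\<lambda>y. \<psi> x y) \<in> borel_measurable lborel" and f: "L_enorm \<psi> < \<infinity>"
  shows "integrable lborel (\<lambda>y. exp (- \<i> * complex_of_real (v \<bullet> y)) * \<psi> x y)"
proof (subst integrable_iff_bounded, intro conjI)
  have m2: "(\<lambda>y. \<psi> x y) \<in> borel_measurable borel" using m by simp
  show "(\<lambda>y. exp (- \<i> * complex_of_real (v \<bullet> y)) * \<psi> x y) \<in> borel_measurable lborel"
    proof -
    have c: "continuous_on UNIV (\<lambda>y. exp (- \<i> * complex_of_real (v \<bullet> y)))"
      by (intro continuous_intros)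
    have e: "(\<lambda>y. exp (- \<i> * complex_of_real (v \<bullet> y))) \<in> borel_measurable borel"
      by (rule borel_measurable_continuous_onI[OF c])
    show ?thesis using borel_measurable_times[OF e m2] by simp
  qed
  have n: "norm (exp (- \<i> * complex_of_real (v \<bullet> y))) = 1" for y
    using norm_exp_i_times[of "- (v \<bullet> y)"] by simp
  have "(\<integral>\<^sup>+ y. ennreal (norm (exp (- \<i> * complex_of_real (v \<bullet> y)) * \<psi> x y)) \<partial>lborel) \<le> L_enorm \<psi>"
    unfolding L_enorm_def by (intro nn_integral_mono) (auto simp: norm_mult n intro: SUP_upper)
  then show "(\<integral>\<^sup>+ y. ennreal (norm (exp (- \<i> * complex_of_real (v \<bullet> y)) * \<psi> x y)) \<partial>lborel) < \<infinity>"
    using f by (rule le_less_trans)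
qed



lemma ev_in: "eventually (\<lambda>e. e \<in> I) (at (e0::real) within I)"
  unfolding eventually_at by (rule exI[of _ 1]) auto

lemma unif:
  assumes s: "s \<in> Cc_Lt I" and e0: "\<epsilon>0 \<in> I" and eta: "\<eta> > 0"
  shows "eventually (\<lambda>\<epsilon>. \<forall>x y. cmod (s \<epsilon> x y - s \<epsilon>0 x y) \<le> \<eta>) (at \<epsilon>0 within I)"
proof -
  from s obtain R where R: "\<And>\<epsilon> x y. norm y > R \<Longrightarrow> s \<epsilon> x y = 0"
    unfolding Cc_Lt_def by blast
  have cl3: "\<forall>y0. \<forall>e>0. \<exists>d>0. \<forall>y. dist y y0 < d \<longrightarrow> (\<forall>\<epsilon>\<in>I. \<forall>x. cmod (s \<epsilon> x y - s \<epsilon> x y0) \<le> e)"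
    using s unfolding Cc_Lt_def by blast
  have cl2: "\<forall>y. \<forall>\<epsilon>0\<in>I. \<forall>e>0. \<exists>d>0. \<forall>\<epsilon>\<in>I. \<bar>\<epsilon> - \<epsilon>0\<bar> < d \<longrightarrow> (\<forall>x. cmod (s \<epsilon> x y - s \<epsilon>0 x y) \<le> e)"
    using s unfolding Cc_Lt_def by blast
  have e3: "\<eta>/3 > 0" using eta by simp
  have c3: "\<And>y0. \<exists>d>0. \<forall>y. dist y y0 < d \<longrightarrow> (\<forall>\<epsilon>\<in>I. \<forall>x. cmod (s \<epsilon> x y - s \<epsilon> x y0) \<le> \<eta>/3)"
    using cl3 e3 by blast
  have c2: "\<And>y. \<exists>d>0. \<forall>\<epsilon>\<in>I. \<bar>\<epsilon> - \<epsilon>0\<bar> < d \<longrightarrow> (\<forall>x. cmod (s \<epsilon> x y - s \<epsilon>0 x y) \<le> \<eta>/3)"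
    using cl2 e3 e0 by blast
  obtain T where T: "finite T" "\<And>y. y \<in> cball 0 R \<Longrightarrow> \<exists>t\<in>T. \<forall>\<epsilon>\<in>I. \<forall>x. cmod (s \<epsilon> x y - s \<epsilon> x t) \<le> \<eta>/3"
    using cover[of "\<lambda>y0 y. \<forall>\<epsilon>\<in>I. \<forall>x. cmod (s \<epsilon> x y - s \<epsilon> x y0) \<le> \<eta>/3" R, OF c3] by blast
  have evt: "eventually (\<lambda>\<epsilon>. \<forall>x. cmod (s \<epsilon> x t - s \<epsilon>0 x t) \<le> \<eta>/3) (at \<epsilon>0 within I)" for t
  proof -
    obtain d where "d > 0" "\<forall>\<epsilon>\<in>I. \<bar>\<epsilon> - \<epsilon>0\<bar> < d \<longrightarrow> (\<forall>x. cmod (s \<epsilon> x t - s \<epsilon>0 x t) \<le> \<eta>/3)"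
      using c2 by blast
    then show ?thesis unfolding eventually_at by (auto simp: dist_real_def)
  qed
  have "eventually (\<lambda>\<epsilon>. \<forall>t\<in>T. \<forall>x. cmod (s \<epsilon> x t - s \<epsilon>0 x t) \<le> \<eta>/3) (at \<epsilon>0 within I)"
    using T(1) evt by (simp add: eventually_ball_finite)
  then show ?thesis using ev_in[of I \<epsilon>0]
  proof eventually_elim
    case (elim \<epsilon>)
    show ?case
    proof (intro allI)
      fix x y
      show "cmod (s \<epsilon> x y - s \<epsilon>0 x y) \<le> \<eta>"
      proof (cases "y \<in> cball 0 R")
        case True
        then obtain t where t: "t \<in> T" "\<forall>\<epsilon>\<in>I. \<forall>x. cmod (s \<epsilon> x y - s \<epsilon> x t) \<le> \<eta>/3"
          using T(2) by blast
        have a: "cmod (s \<epsilon> x y - s \<epsilon> x t) \<le> \<eta>/3" using t elim by blast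
        have b: "cmod (s \<epsilon> x t - s \<epsilon>0 x t) \<le> \<eta>/3" using t elim by blast
        have c0: "cmod (s \<epsilon>0 x y - s \<epsilon>0 x t) \<le> \<eta>/3" using t e0 by blast
        have c: "cmod (s \<epsilon>0 x t - s \<epsilon>0 x y) \<le> \<eta>/3" using c0 by (simp add: norm_minus_commute)
        have eq: "s \<epsilon> x y - s \<epsilon>0 x y = (s \<epsilon> x y - s \<epsilon> x t) + (s \<epsilon> x t - s \<epsilon>0 x t) + (s \<epsilon>0 x t - s \<epsilon>0 x y)"
          by simp
        have "cmod (s \<epsilon> x y - s \<epsilon>0 x y) \<le> cmod (s \<epsilon> x y - s \<epsilon> x t) + cmod (s \<epsilon> x t - s \<epsilon>0 x t) + cmod (s \<epsilon>0 x t - s \<epsilon>0 x y)"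
          unfolding eq by (rule order_trans[OF norm_triangle_ineq add_mono[OF norm_triangle_ineq order_refl]])
        then show ?thesis using a b c by linarith
      next
        case False
        then have "norm y > R" by auto
        then show ?thesis using R eta by simp
      qed
    qed
  qed
qed

lemma bnd:
  assumes s: "s \<in> Cc_Lt I" and e: "\<epsilon> \<in> I"
  shows "\<exists>M. \<forall>x y. cmod (s \<epsilon> x y) \<le> M"
proof -
  from s obtain R where R: "\<And>\<epsilon> x y. norm y > R \<Longrightarrow> s \<epsilon> x y = 0"
    unfolding Cc_Lt_def by blast
  have cl3: "\<forall>y0. \<forall>e>0. \<exists>d>0. \<forall>y. dist y y0 < d \<longrightarrow> (\<forall>\<epsilon>\<in>I. \<forall>x. cmod (s \<epsilon> x y - s \<epsilon> x y0) \<le> e)"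
    using s unfolding Cc_Lt_def by blast
  have c3: "\<And>y0. \<exists>d>0. \<forall>y. dist y y0 < d \<longrightarrow> (\<forall>x. cmod (s \<epsilon> x y - s \<epsilon> x y0) \<le> 1)"
    using cl3 e zero_less_one by blast
  obtain T where T: "finite T" "\<And>y. y \<in> cball 0 R \<Longrightarrow> \<exists>t\<in>T. \<forall>x. cmod (s \<epsilon> x y - s \<epsilon> x t) \<le> 1"
    using cover[of "\<lambda>y0 y. \<forall>x. cmod (s \<epsilon> x y - s \<epsilon> x y0) \<le> 1" R, OF c3] by blast
  have "\<forall>y. \<exists>b. \<forall>x. cmod (s \<epsilon> x y) \<le> b"
  proof
    fix y
    have "bounded (range (\<lambda>x. s \<epsilon> x y))" using s e unfolding Cc_Lt_def BCu_def by blast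
    then show "\<exists>b. \<forall>x. cmod (s \<epsilon> x y) \<le> b" unfolding bounded_iff by blast
  qed
  then obtain b where b: "\<And>x y. cmod (s \<epsilon> x y) \<le> b y" by metis
  define M where "M = 1 + (\<Sum>t\<in>T. \<bar>b t\<bar>)"
  have "cmod (s \<epsilon> x y) \<le> M" for x y
  proof (cases "y \<in> cball 0 R")
    case True
    then obtain t where t: "t \<in> T" "\<forall>x. cmod (s \<epsilon> x y - s \<epsilon> x t) \<le> 1" using T(2) by blast
    have "cmod (s \<epsilon> x y) \<le> cmod (s \<epsilon> x y - s \<epsilon> x t) + cmod (s \<epsilon> x t)"
      using norm_triangle_ineq[of "s \<epsilon> x y - s \<epsilon> x t" "s \<epsilon> x t"] by simp
    also have "\<dots> \<le> 1 + \<bar>b t\<bar>" using t b[of x t] by (intro add_mono) auto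
    also have "\<bar>b t\<bar> \<le> (\<Sum>t\<in>T. \<bar>b t\<bar>)" using t T(1) by (intro member_le_sum) auto
    finally show ?thesis unfolding M_def by linarith
  next
    case False
    then show ?thesis using R[of y] unfolding M_def by (simp add: sum_nonneg add_nonneg_nonneg)
  qed
  then show ?thesis by blast
qed


lemma supm2:
  fixes f g :: "real^'n::finite \<Rightarrow> real^'n \<Rightarrow> complex"
  assumes "\<And>y. continuous_on UNIV (\<lambda>x. f x y)" "\<And>y. continuous_on UNIV (\<lambda>x. g x y)"
    "\<And>x. (\<lambda>y. f x y) \<in> borel_measurable lborel" "\<And>x. (\<lambda>y. g x y) \<in> borel_measurable lborel"
  shows "(\<lambda>y. SUP x. ennreal (cmod (f x y - g x y))) \<in> borel_measurable lborel"
proof -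
  have f: "\<And>x. f x \<in> borel_measurable borel" and g: "\<And>x. g x \<in> borel_measurable borel"
    using assms(3,4) by simp_all
  show ?thesis by (rule sup_meas) (auto intro!: continuous_on_diff borel_measurable_diff assms f g)
qed

lemma tri_diff:
  fixes a b c d :: "real^'n::finite \<Rightarrow> real^'n \<Rightarrow> complex"
  assumes "(\<lambda>y. SUP x. ennreal (cmod (a x y - c x y))) \<in> borel_measurable lborel"
    "(\<lambda>y. SUP x. ennreal (cmod (d x y - b x y))) \<in> borel_measurable lborel"
  shows "L_enorm (\<lambda>x y. (a x y - b x y) - (c x y - d x y)) \<le> L_enorm (\<lambda>x y. a x y - c x y) + L_enorm (\<lambda>x y. d x y - b x y)"
proof -
  have e1: "(\<lambda>x y. (a x y - b x y) - (c x y - b x y)) = (\<lambda>x y. a x y - c x y)" by simp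
  have e2: "(\<lambda>x y. (c x y - b x y) - (c x y - d x y)) = (\<lambda>x y. d x y - b x y)" by simp
  have "L_enorm (\<lambda>x y. (a x y - b x y) - (c x y - d x y)) \<le> L_enorm (\<lambda>x y. (a x y - b x y) - (c x y - b x y)) + L_enorm (\<lambda>x y. (c x y - b x y) - (c x y - d x y))"
    by (rule tri) (use assms in simp_all)
  then show ?thesis unfolding e1 e2 .
qed

lemma L_le_Lt:
  assumes "\<epsilon> \<in> I"
  shows "L_enorm (\<lambda>x y. F \<epsilon> x y - G \<epsilon> x y) \<le> Lt_enorm I (\<lambda>\<epsilon> x y. F \<epsilon> x y - G \<epsilon> x y)"
    "L_enorm (\<lambda>x y. G \<epsilon> x y - F \<epsilon> x y) \<le> Lt_enorm I (\<lambda>\<epsilon> x y. F \<epsilon> x y - G \<epsilon> x y)"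
proof -
  have p: "(SUP x. ennreal (cmod (F \<epsilon> x y - G \<epsilon> x y))) \<le> (SUP \<epsilon>\<in>I. SUP x. ennreal (cmod (F \<epsilon> x y - G \<epsilon> x y)))" for y
    using assms by (rule SUP_upper)
  show "L_enorm (\<lambda>x y. F \<epsilon> x y - G \<epsilon> x y) \<le> Lt_enorm I (\<lambda>\<epsilon> x y. F \<epsilon> x y - G \<epsilon> x y)"
    unfolding L_enorm_def Lt_enorm_def by (rule nn_integral_mono) (rule p)
  have "(SUP x. ennreal (cmod (G \<epsilon> x y - F \<epsilon> x y))) = (SUP x. ennreal (cmod (F \<epsilon> x y - G \<epsilon> x y)))" for y
    by (simp add: norm_minus_commute)
  then show "L_enorm (\<lambda>x y. G \<epsilon> x y - F \<epsilon> x y) \<le> Lt_enorm I (\<lambda>\<epsilon> x y. F \<epsilon> x y - G \<epsilon> x y)"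
    unfolding L_enorm_def Lt_enorm_def by (intro nn_integral_mono) (simp add: p)
qed

lemma ennreal_tendsto0I:
  fixes f :: "'a \<Rightarrow> ennreal"
  assumes "\<And>e. e > 0 \<Longrightarrow> eventually (\<lambda>x. f x < ennreal e) F"
  shows "(f \<longlongrightarrow> 0) F"
proof (rule order_tendstoI)
  fix a :: ennreal assume "a < 0" then show "eventually (\<lambda>x. a < f x) F" by simp
next
  fix a :: ennreal assume a: "0 < a"
  show "eventually (\<lambda>x. f x < a) F"
  proof (cases a rule: ennreal_cases)
    case (real r)
    then have "r > 0" using a by simp
    then show ?thesis using assms[of r] real by simp
  next
    case top
    have "eventually (\<lambda>x. f x < ennreal 1) F" using assms[of 1] by simp
    then show ?thesis by (rule eventually_mono) (metis top ennreal_1 ennreal_less_top order.strict_trans)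
  qed
qed

lemma s_cont_y:
  assumes s: "s \<in> Cc_Lt I" and e: "\<epsilon> \<in> I"
  shows "continuous_on UNIV (\<lambda>y. s \<epsilon> x y)"
proof -
  have cl3: "\<forall>y0. \<forall>e>0. \<exists>d>0. \<forall>y. dist y y0 < d \<longrightarrow> (\<forall>\<epsilon>\<in>I. \<forall>x. cmod (s \<epsilon> x y - s \<epsilon> x y0) \<le> e)"
    using s unfolding Cc_Lt_def by blast
  show ?thesis unfolding continuous_on_iff
  proof (intro ballI allI impI)
    fix y0 and e :: real assume "e > 0"
    then have "e/2 > 0" by simp
    then obtain d where d: "d > 0" "\<forall>y. dist y y0 < d \<longrightarrow> (\<forall>\<epsilon>\<in>I. \<forall>x. cmod (s \<epsilon> x y - s \<epsilon> x y0) \<le> e/2)"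
      using cl3 by blast
    have "\<forall>y\<in>UNIV. dist y y0 < d \<longrightarrow> dist (s \<epsilon> x y) (s \<epsilon> x y0) < e"
    proof (intro ballI impI)
      fix y assume "dist y y0 < d"
      then have "cmod (s \<epsilon> x y - s \<epsilon> x y0) \<le> e/2" using d e by blast
      then show "dist (s \<epsilon> x y) (s \<epsilon> x y0) < e" using \<open>e > 0\<close> by (simp add: dist_norm)
    qed
    then show "\<exists>d>0. \<forall>y\<in>UNIV. dist y y0 < d \<longrightarrow> dist (s \<epsilon> x y) (s \<epsilon> x y0) < e" using d(1) by blast
  qed
qed

lemma s_meas_y:
  assumes s: "s \<in> Cc_Lt I" and e: "\<epsilon> \<in> I"
  shows "(\<lambda>y. s \<epsilon> x y) \<in> borel_measurable lborel"
  using borel_measurable_continuous_onI[OF s_cont_y[OF s e]] by simp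

lemma s_cont_x:
  assumes s: "s \<in> Cc_Lt I" and e: "\<epsilon> \<in> I"
  shows "continuous_on UNIV (\<lambda>x. s \<epsilon> x y)"
  using s e unfolding Cc_Lt_def BCu_def by (blast intro: uniformly_continuous_imp_continuous)




theorem corollary2:
  fixes \<alpha> \<beta> m C a :: real
    and h :: "real \<Rightarrow> 'n::finite phase \<Rightarrow> real"
    and B :: "real \<Rightarrow> 'n \<Rightarrow> 'n \<Rightarrow> real^'n \<Rightarrow> real"
    and r :: "real \<Rightarrow> complex \<Rightarrow> 'n phase \<Rightarrow> complex"
  assumes I: "\<alpha> \<le> \<beta>"
    and m: "m > 0"
    and h_symb: "\<forall>\<epsilon>\<in>{\<alpha>..\<beta>}. S1 m (\<lambda>X. complex_of_real (h \<epsilon> X))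
                                 \<and> elliptic m (\<lambda>X. complex_of_real (h \<epsilon> X))"
    and h_cont: "S1_cont m {\<alpha>..\<beta>} (\<lambda>\<epsilon> X. complex_of_real (h \<epsilon> X))"
    and h_below: "\<forall>\<epsilon>\<in>{\<alpha>..\<beta>}. \<forall>X. h \<epsilon> X \<ge> - C"
    and B_mag: "\<forall>\<epsilon>\<in>{\<alpha>..\<beta>}. magnetic_field (B \<epsilon>)"
    and B_cont: "BC_cont {\<alpha>..\<beta>} B"
    and a: "a > 0"
    and res: "\<forall>z. z \<notin> complex_of_real ` {a..} \<longrightarrow>
               (\<forall>\<epsilon>\<in>{\<alpha>..\<beta>}. sharp_inverse (B \<epsilon>) (\<lambda>X. complex_of_real (h \<epsilon> X) - z) (r \<epsilon> z)
                               \<and> r \<epsilon> z \<in> FLset)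
               \<and> FLt {\<alpha>..\<beta>} (\<lambda>\<epsilon>. r \<epsilon> z)"
  shows "\<forall>z. z \<notin> complex_of_real ` {a..} \<longrightarrow>
           (\<forall>\<epsilon>0\<in>{\<alpha>..\<beta>}. ((\<lambda>\<epsilon>. FL_norm (\<lambda>X. r \<epsilon> z X - r \<epsilon>0 z X)) \<longlongrightarrow> 0) (at \<epsilon>0 within {\<alpha>..\<beta>}))"
  proof (intro allI impI ballI)
  fix z :: complex and \<epsilon>0
  assume z: "z \<notin> complex_of_real ` {a..}" and e0: "\<epsilon>0 \<in> {\<alpha>..\<beta>}"
  obtain \<phi> where \<phi>: "\<phi> \<in> Ltset {\<alpha>..\<beta>}" "\<forall>\<epsilon>\<in>{\<alpha>..\<beta>}. r \<epsilon> z = Fou (\<phi> \<epsilon>)"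
    using res z unfolding FLt_def by blast
  have phBC: "\<And>\<epsilon> y. \<epsilon> \<in> {\<alpha>..\<beta>} \<Longrightarrow> BCu (\<lambda>x. \<phi> \<epsilon> x y)"
    using \<phi>(1) unfolding Ltset_def by blast
  have phM: "\<And>\<epsilon> x. \<epsilon> \<in> {\<alpha>..\<beta>} \<Longrightarrow> (\<lambda>y. \<phi> \<epsilon> x y) \<in> borel_measurable lborel"
    using \<phi>(1) unfolding Ltset_def by blast
  obtain s where s: "\<And>k. s k \<in> Cc_Lt {\<alpha>..\<beta>}"
    "(\<lambda>k. Lt_enorm {\<alpha>..\<beta>} (\<lambda>\<epsilon> x y. s k \<epsilon> x y - \<phi> \<epsilon> x y)) \<longlonglongrightarrow> 0"
    using \<phi>(1) unfolding Ltset_def by blast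
  define Lt where "Lt k = Lt_enorm {\<alpha>..\<beta>} (\<lambda>\<epsilon> x y. s k \<epsilon> x y - \<phi> \<epsilon> x y)" for k
  have Lt0: "Lt \<longlonglongrightarrow> 0" using s(2) unfolding Lt_def .
  have phC: "\<And>\<epsilon> y. \<epsilon> \<in> {\<alpha>..\<beta>} \<Longrightarrow> continuous_on UNIV (\<lambda>x. \<phi> \<epsilon> x y)"
    using phBC unfolding BCu_def by (blast intro: uniformly_continuous_imp_continuous)
  have sC: "\<And>k \<epsilon> y. \<epsilon> \<in> {\<alpha>..\<beta>} \<Longrightarrow> continuous_on UNIV (\<lambda>x. s k \<epsilon> x y)"
    using s(1) by (rule s_cont_x)
  have sM: "\<And>k \<epsilon> x. \<epsilon> \<in> {\<alpha>..\<beta>} \<Longrightarrow> (\<lambda>y. s k \<epsilon> x y) \<in> borel_measurable lborel"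
    using s(1) by (rule s_meas_y)
  have sBC: "\<And>k \<epsilon> y. \<epsilon> \<in> {\<alpha>..\<beta>} \<Longrightarrow> BCu (\<lambda>x. s k \<epsilon> x y)"
    using s(1) unfolding Cc_Lt_def by blast
  have sR: "\<exists>R. \<forall>\<epsilon> x y. norm y > R \<longrightarrow> s k \<epsilon> x y = 0" for k
    using s(1)[of k] unfolding Cc_Lt_def by blast
  have s3: "\<forall>y0. \<forall>e>0. \<exists>d>0. \<forall>y. dist y y0 < d \<longrightarrow> (\<forall>\<epsilon>\<in>{\<alpha>..\<beta>}. \<forall>x. cmod (s k \<epsilon> x y - s k \<epsilon> x y0) \<le> e)" for k
    using s(1)[of k] unfolding Cc_Lt_def by blast
  have "eventually (\<lambda>k. Lt k < 1) sequentially"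
    using Lt0 by (rule order_tendstoD) simp
  then obtain k0 where k0: "Lt k0 < 1" by (auto simp: eventually_sequentially)
  have Lfin: "L_enorm (\<phi> \<epsilon>) < \<infinity>" if e: "\<epsilon> \<in> {\<alpha>..\<beta>}" for \<epsilon>
  proof -
    have "L_enorm (\<lambda>x y. \<phi> \<epsilon> x y - (\<lambda>x y. 0) x y) \<le> L_enorm (\<lambda>x y. \<phi> \<epsilon> x y - s k0 \<epsilon> x y) + L_enorm (\<lambda>x y. s k0 \<epsilon> x y - (\<lambda>x y. 0) x y)"
      by (rule tri) (intro supm2 phC phM sC sM e continuous_on_const borel_measurable_const)+
    then have t: "L_enorm (\<phi> \<epsilon>) \<le> L_enorm (\<lambda>x y. \<phi> \<epsilon> x y - s k0 \<epsilon> x y) + L_enorm (s k0 \<epsilon>)"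
      by simp
    have a1: "L_enorm (\<lambda>x y. \<phi> \<epsilon> x y - s k0 \<epsilon> x y) < \<infinity>"
    proof -
      have "Lt k0 \<noteq> \<infinity>" using k0 by auto
      then have "Lt k0 < \<infinity>" by (simp add: less_top)
      then show ?thesis using L_le_Lt(2)[OF e, where F="s k0" and G=\<phi>] unfolding Lt_def by (rule le_less_trans[rotated])
    qed
    obtain M where M: "\<forall>x y. cmod (s k0 \<epsilon> x y) \<le> M" using bnd[OF s(1) e] by blast
    obtain R where R: "\<forall>\<epsilon> x y. norm y > R \<longrightarrow> s k0 \<epsilon> x y = 0" using sR by blast
    have a2: "L_enorm (s k0 \<epsilon>) < \<infinity>"
      by (rule bound_L_fin[of _ M R]) (use M R in auto)
    have "L_enorm (\<lambda>x y. \<phi> \<epsilon> x y - s k0 \<epsilon> x y) + L_enorm (s k0 \<epsilon>) < \<infinity>"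
      using a1 a2 by (simp add: less_top)
    then show ?thesis using t by (rule le_less_trans[rotated])
  qed
  define \<psi> where "\<psi> \<epsilon> = (\<lambda>x y. \<phi> \<epsilon> x y - \<phi> \<epsilon>0 x y)" for \<epsilon>
  have \<psi>L: "\<psi> \<epsilon> \<in> Lset" if e: "\<epsilon> \<in> {\<alpha>..\<beta>}" for \<epsilon>
  proof -
    have c1: "\<forall>y. BCu (\<lambda>x. \<psi> \<epsilon> x y)"
      using phBC[OF e] phBC[OF e0] unfolding BCu_def \<psi>_def
      by (auto intro: bounded_minus_comp uniformly_continuous_on_diff)
    have c2: "\<forall>x. (\<lambda>y. \<psi> \<epsilon> x y) \<in> borel_measurable lborel"
      unfolding \<psi>_def by (intro allI borel_measurable_diff phM e e0)
    define t where "t k = (\<lambda>x y. s k \<epsilon> x y - s k \<epsilon>0 x y)" for k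
    have tC: "t k \<in> Cc_L" for k
    proof -
      have "\<forall>y. BCu (\<lambda>x. t k x y)"
        using sBC[OF e] sBC[OF e0] unfolding BCu_def t_def
        by (auto intro: bounded_minus_comp uniformly_continuous_on_diff)
      moreover have "\<forall>y0. \<forall>e>0. \<exists>d>0. \<forall>y. dist y y0 < d \<longrightarrow> (\<forall>x. cmod (t k x y - t k x y0) \<le> e)"
      proof (intro allI impI)
        fix y0 and ee :: real assume "ee > 0"
        then have "ee/2 > 0" by simp
        then obtain d where d: "d > 0" "\<forall>y. dist y y0 < d \<longrightarrow> (\<forall>\<epsilon>\<in>{\<alpha>..\<beta>}. \<forall>x. cmod (s k \<epsilon> x y - s k \<epsilon> x y0) \<le> ee/2)"
          using s3 by blast
        have "\<forall>y. dist y y0 < d \<longrightarrow> (\<forall>x. cmod (t k x y - t k x y0) \<le> ee)"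
        proof (intro allI impI)
          fix y x assume "dist y y0 < d"
          then have h1: "cmod (s k \<epsilon> x y - s k \<epsilon> x y0) \<le> ee/2" and h2: "cmod (s k \<epsilon>0 x y - s k \<epsilon>0 x y0) \<le> ee/2"
            using d e e0 by blast+
          have eq: "t k x y - t k x y0 = (s k \<epsilon> x y - s k \<epsilon> x y0) - (s k \<epsilon>0 x y - s k \<epsilon>0 x y0)"
            unfolding t_def by simp
          show "cmod (t k x y - t k x y0) \<le> ee"
            unfolding eq using norm_triangle_ineq4[of "s k \<epsilon> x y - s k \<epsilon> x y0" "s k \<epsilon>0 x y - s k \<epsilon>0 x y0"] h1 h2 by linarith
        qed
        then show "\<exists>d>0. \<forall>y. dist y y0 < d \<longrightarrow> (\<forall>x. cmod (t k x y - t k x y0) \<le> ee)" using d(1) by blast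
      qed
      moreover have "\<exists>R. \<forall>x y. norm y > R \<longrightarrow> t k x y = 0"
        using sR[of k] unfolding t_def by (metis diff_self)
      ultimately show ?thesis unfolding Cc_L_def by blast
    qed
    have tl: "(\<lambda>k. L_enorm (\<lambda>x y. t k x y - \<psi> \<epsilon> x y)) \<longlonglongrightarrow> 0"
    proof (rule tendsto_sandwich[of "\<lambda>_. 0" _ sequentially "\<lambda>k. Lt k + Lt k"])
      show "eventually (\<lambda>k. (0::ennreal) \<le> L_enorm (\<lambda>x y. t k x y - \<psi> \<epsilon> x y)) sequentially" by simp
      show "eventually (\<lambda>k. L_enorm (\<lambda>x y. t k x y - \<psi> \<epsilon> x y) \<le> Lt k + Lt k) sequentially"
      proof (intro always_eventually allI)
        fix k
        have "L_enorm (\<lambda>x y. t k x y - \<psi> \<epsilon> x y) \<le> L_enorm (\<lambda>x y. s k \<epsilon> x y - \<phi> \<epsilon> x y) + L_enorm (\<lambda>x y. \<phi> \<epsilon>0 x y - s k \<epsilon>0 x y)"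
          unfolding t_def \<psi>_def
          by (rule tri_diff) (intro supm2 phC phM sC sM e e0)+
        also have "\<dots> \<le> Lt k + Lt k"
          unfolding Lt_def by (intro add_mono L_le_Lt e e0)
        finally show "L_enorm (\<lambda>x y. t k x y - \<psi> \<epsilon> x y) \<le> Lt k + Lt k" .
      qed
      show "((\<lambda>_. 0::ennreal) \<longlongrightarrow> 0) sequentially" by simp
      show "((\<lambda>k. Lt k + Lt k) \<longlongrightarrow> 0) sequentially" using tendsto_add[OF Lt0 Lt0] by simp
    qed
    show ?thesis unfolding Lset_def using c1 c2 tC tl by blast
  qed
  have \<psi>F: "Fou (\<psi> \<epsilon>) = (\<lambda>X. r \<epsilon> z X - r \<epsilon>0 z X)" if e: "\<epsilon> \<in> {\<alpha>..\<beta>}" for \<epsilon>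
  proof
    fix X :: "'n phase"
    have i1: "integrable lborel (\<lambda>y. exp (- \<i> * complex_of_real (snd X \<bullet> y)) * \<phi> \<epsilon> (fst X) y)"
      by (rule int_L[OF phM[OF e] Lfin[OF e]])
    have i2: "integrable lborel (\<lambda>y. exp (- \<i> * complex_of_real (snd X \<bullet> y)) * \<phi> \<epsilon>0 (fst X) y)"
      by (rule int_L[OF phM[OF e0] Lfin[OF e0]])
    have "Fou (\<psi> \<epsilon>) X = Fou (\<phi> \<epsilon>) X - Fou (\<phi> \<epsilon>0) X"
      unfolding Fou_def \<psi>_def
      using Bochner_Integration.integral_diff[OF i1 i2] by (simp add: right_diff_distrib)
    then show "Fou (\<psi> \<epsilon>) X = r \<epsilon> z X - r \<epsilon>0 z X" using \<phi>(2) e e0 by simp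
  qed
  have FLb: "0 \<le> FL_norm (\<lambda>X. r \<epsilon> z X - r \<epsilon>0 z X) \<and> FL_norm (\<lambda>X. r \<epsilon> z X - r \<epsilon>0 z X) \<le> L_norm (\<psi> \<epsilon>)"
    if e: "\<epsilon> \<in> {\<alpha>..\<beta>}" for \<epsilon>
  proof -
    let ?S = "{L_norm \<phi>' | \<phi>'. \<phi>' \<in> Lset \<and> (\<lambda>X. r \<epsilon> z X - r \<epsilon>0 z X) = Fou \<phi>'}"
    have mem: "L_norm (\<psi> \<epsilon>) \<in> ?S" using \<psi>L[OF e] \<psi>F[OF e] by force
    have nn: "\<And>v. v \<in> ?S \<Longrightarrow> 0 \<le> v" unfolding L_norm_def by auto
    have "bdd_below ?S" using nn by (auto simp: bdd_below_def)
    then have "Inf ?S \<le> L_norm (\<psi> \<epsilon>)" using mem by (intro cInf_lower)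
    moreover have "0 \<le> Inf ?S" using mem nn by (intro cInf_greatest) auto
    ultimately show ?thesis unfolding FL_norm_def by simp
  qed
  have Le: "eventually (\<lambda>\<epsilon>. L_enorm (\<psi> \<epsilon>) < ennreal e) (at \<epsilon>0 within {\<alpha>..\<beta>})" if e: "e > 0" for e
  proof -
    have "eventually (\<lambda>k. Lt k < ennreal (e/4)) sequentially"
      using Lt0 by (rule order_tendstoD) (use e in simp)
    then obtain k where k: "Lt k < ennreal (e/4)" by (auto simp: eventually_sequentially)
    obtain R where R: "\<forall>\<epsilon> x y. norm y > R \<longrightarrow> s k \<epsilon> x y = 0" using sR by blast
    define Mb where "Mb = measure lborel (cball (0::real^'n) R)"
    have Mb0: "Mb \<ge> 0" unfolding Mb_def by simp
    have emb: "emeasure lborel (cball (0::real^'n) R) = ennreal Mb"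
      unfolding Mb_def using emeasure_lborel_cball_finite[of "0::real^'n" R]
      by (intro emeasure_eq_ennreal_measure) simp
    define \<eta> where "\<eta> = e / (4 * (Mb + 1))"
    have \<eta>0: "\<eta> > 0" unfolding \<eta>_def using e Mb0 by simp
    have \<eta>M: "\<eta> * Mb \<le> e/4"
    proof -
      have "\<eta> * Mb \<le> \<eta> * (Mb + 1)" using \<eta>0 by simp
      also have "\<eta> * (Mb + 1) = e/4" unfolding \<eta>_def using Mb0 by (simp add: field_simps)
      finally show ?thesis .
    qed
    have ev: "eventually (\<lambda>\<epsilon>. \<forall>x y. cmod (s k \<epsilon> x y - s k \<epsilon>0 x y) \<le> \<eta>) (at \<epsilon>0 within {\<alpha>..\<beta>})"
      by (rule unif[OF s(1) e0 \<eta>0])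
    show ?thesis using ev ev_in[of "{\<alpha>..\<beta>}" \<epsilon>0]
    proof eventually_elim
      case (elim \<epsilon>)
      then have e1: "\<epsilon> \<in> {\<alpha>..\<beta>}" by simp
      have A: "L_enorm (\<psi> \<epsilon>) \<le> L_enorm (\<lambda>x y. \<phi> \<epsilon> x y - s k \<epsilon> x y) + L_enorm (\<lambda>x y. s k \<epsilon> x y - \<phi> \<epsilon>0 x y)"
        unfolding \<psi>_def by (rule tri) (intro supm2 phC phM sC sM e1 e0)+
      have B: "L_enorm (\<lambda>x y. s k \<epsilon> x y - \<phi> \<epsilon>0 x y) \<le> L_enorm (\<lambda>x y. s k \<epsilon> x y - s k \<epsilon>0 x y) + L_enorm (\<lambda>x y. s k \<epsilon>0 x y - \<phi> \<epsilon>0 x y)"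
        by (rule tri) (intro supm2 phC phM sC sM e1 e0)+
      have C1: "L_enorm (\<lambda>x y. \<phi> \<epsilon> x y - s k \<epsilon> x y) \<le> ennreal (e/4)"
        using L_le_Lt(2)[OF e1, where F="s k" and G=\<phi>] k unfolding Lt_def by simp
      have C3: "L_enorm (\<lambda>x y. s k \<epsilon>0 x y - \<phi> \<epsilon>0 x y) \<le> ennreal (e/4)"
        using L_le_Lt(1)[OF e0, where F="s k" and G=\<phi>] k unfolding Lt_def by simp
      have "L_enorm (\<lambda>x y. s k \<epsilon> x y - s k \<epsilon>0 x y) \<le> ennreal \<eta> * emeasure lborel (cball (0::real^'n) R)"
        by (rule bound_L) (use elim R in auto)
      also have "\<dots> = ennreal (\<eta> * Mb)" using emb \<eta>0 Mb0 by (simp add: ennreal_mult)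
      also have "\<dots> \<le> ennreal (e/4)" using \<eta>M by (rule ennreal_leI)
      finally have C2: "L_enorm (\<lambda>x y. s k \<epsilon> x y - s k \<epsilon>0 x y) \<le> ennreal (e/4)" .
      have "L_enorm (\<psi> \<epsilon>) \<le> ennreal (e/4) + (ennreal (e/4) + ennreal (e/4))"
        using A B C1 C2 C3 by (meson add_mono order_trans)
      also have "\<dots> = ennreal (3*e/4)" using e by (simp add: ennreal_plus[symmetric] del: ennreal_plus)
      also have "\<dots> < ennreal e" using e by (intro ennreal_lessI) auto
      finally show ?case .
    qed
  qed
  have "((\<lambda>\<epsilon>. L_enorm (\<psi> \<epsilon>)) \<longlongrightarrow> 0) (at \<epsilon>0 within {\<alpha>..\<beta>})"
    by (rule ennreal_tendsto0I) (rule Le)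
  then have Ln: "((\<lambda>\<epsilon>. L_norm (\<psi> \<epsilon>)) \<longlongrightarrow> 0) (at \<epsilon>0 within {\<alpha>..\<beta>})"
    unfolding L_norm_def using tendsto_enn2real[of "\<lambda>\<epsilon>. L_enorm (\<psi> \<epsilon>)" 0] by simp
  show "((\<lambda>\<epsilon>. FL_norm (\<lambda>X. r \<epsilon> z X - r \<epsilon>0 z X)) \<longlongrightarrow> 0) (at \<epsilon>0 within {\<alpha>..\<beta>})"
  proof (rule tendsto_sandwich[of "\<lambda>_. 0" _ _ "\<lambda>\<epsilon>. L_norm (\<psi> \<epsilon>)"])
    show "eventually (\<lambda>\<epsilon>. (0::real) \<le> FL_norm (\<lambda>X. r \<epsilon> z X - r \<epsilon>0 z X)) (at \<epsilon>0 within {\<alpha>..\<beta>})"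
      using ev_in[of "{\<alpha>..\<beta>}" \<epsilon>0] by (rule eventually_mono) (use FLb in blast)
    show "eventually (\<lambda>\<epsilon>. FL_norm (\<lambda>X. r \<epsilon> z X - r \<epsilon>0 z X) \<le> L_norm (\<psi> \<epsilon>)) (at \<epsilon>0 within {\<alpha>..\<beta>})"
      using ev_in[of "{\<alpha>..\<beta>}" \<epsilon>0] by (rule eventually_mono) (use FLb in blast)
  qed (use Ln in auto)
qed

end
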